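(* Let $U$ be a one-dimensional quantum walk on $\mathcal H=\bigoplus_{n\in\mathbb Z}\mathcal H_n$. Then $U$ is unitary equivalent to \[ U_{r,\theta}=\sum_{n\in\mathbb Z}|e_1^{n-1}\rangle\langle r_ne_1^n+e^{i\theta_n}s_ne_2^n|+|e_2^{n+1}\rangle\langle -e^{-i\theta_n}s_ne_1^n+r_ne_2^n| \] for some sequences $0\le r_n\le 1$ and $\theta_n\in\mathbb R$ ($n\in\mathbb Z$), where $s_n=\sqrt{1-r_n^2}$ and $\theta_0=\theta_1=0$.
   Context: Let $\mathcal H_n=\mathbb C^2$ for $n\in\mathbb Z$, $\mathcal H=\bigoplus_{n\in\mathbb Z}\mathcal H_n$, $P_n$ the orthogonal projection of $\mathcal H$ onto $\mathcal H_n$, and $\{e_1^n,e_2^n\}$ the standard basis of $\mathcal H_n$. Dirac notation: for $x,y\in\mathcal H$, $|x\rangle\langle y|$ is the rank-one operator $z\mapsto\langle y,z\rangle x$ (inner product conjugate-linear in the first argument). A one-dimensional quantum walk is a unitary operator $U$ on $\mathcal H$ such that $\operatorname{rank}(P_nUP_m)=1$ if $m=n\pm1$ and $\operatorname{rank}(P_nUP_m)=0$ otherwise. Since $U$ and $e^{i\lambda}U$ are identified, two such unitaries $U_1,U_2$ are called unitary equivalent if there exist $\lambda\in\mathbb R$ and a unitary $W=\bigoplus_{n\in\mathbb Z}W_n$ (each $W_n$ a unitary on $\mathcal H_n$) with $e^{i\lambda}WU_1W^*=U_2$. *)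

theory Defs
  imports "HOL-Analysis.Analysis"
begin

text \<open>
Representation. \<open>H = \<Oplus>_{n\<in>\<int>} H_n\<close>, \<open>H_n = \<complex>^2\<close>. A (bounded) operator T on H is
represented by its block matrix: \<open>T n m :: complex^2^2\<close> is the matrix of \<open>P_n T P_m\<close>
(as a map \<open>H_m \<rightarrow> H_n\<close>) w.r.t. the standard bases, i.e.
\<open>(T n m) $ i $ j = \<langle>e_i^n, T e_j^m\<rangle>\<close>.
\<close>

type_synonym blockop = "int \<Rightarrow> int \<Rightarrow> complex^2^2"

definition entry :: "blockop \<Rightarrow> int \<times> 2 \<Rightarrow> int \<times> 2 \<Rightarrow> complex" where
  "entry T a b = T (fst a) (fst b) $ snd a $ snd b"

text \<open>A bounded operator on H is unitary iff its matrix has orthonormal columns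
(\<open>U\<^sup>*U = I\<close>) and orthonormal rows (\<open>UU\<^sup>* = I\<close>); conversely every matrix with
orthonormal columns defines a bounded isometry.\<close>
definition unitary_op :: "blockop \<Rightarrow> bool" where
  "unitary_op U \<longleftrightarrow>
     (\<forall>b c. ((\<lambda>a. cnj (entry U a b) * entry U a c) has_sum (if b = c then 1 else 0)) UNIV) \<and>
     (\<forall>a d. ((\<lambda>b. entry U a b * cnj (entry U d b)) has_sum (if a = d then 1 else 0)) UNIV)"

definition quantum_walk :: "blockop \<Rightarrow> bool" where
  "quantum_walk U \<longleftrightarrow> unitary_op U \<and>
     (\<forall>n m. rank (U n m) = (if m = n + 1 \<or> m = n - 1 then 1 else 0))"

definition adj2 :: "complex^2^2 \<Rightarrow> complex^2^2" where
  "adj2 A = (\<chi> i j. cnj (A $ j $ i))"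

definition unitary2 :: "complex^2^2 \<Rightarrow> bool" where
  "unitary2 A \<longleftrightarrow> adj2 A ** A = mat 1 \<and> A ** adj2 A = mat 1"

text \<open>\<open>e^{i\<lambda>} W U\<^sub>1 W\<^sup>* = U\<^sub>2\<close> with \<open>W = \<Oplus> W_n\<close> block diagonal, written blockwise.\<close>
definition unitary_equiv :: "blockop \<Rightarrow> blockop \<Rightarrow> bool" where
  "unitary_equiv U1 U2 \<longleftrightarrow>
     (\<exists>(lam::real) (W::int \<Rightarrow> complex^2^2). (\<forall>n. unitary2 (W n)) \<and>
        (\<forall>n m. mat (exp (\<i> * complex_of_real lam)) ** W n ** U1 n m ** adj2 (W m) = U2 n m))"

definition e1 :: "complex^2" where "e1 = axis 1 1"
definition e2 :: "complex^2" where "e2 = axis 2 1"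

text \<open>Rank-one operator \<open>|x\<rangle>\<langle>y|\<close> for \<open>x \<in> H_a\<close>, \<open>y \<in> H_b\<close>: \<open>z \<mapsto> \<langle>y,z\<rangle> x\<close>
(inner product conjugate-linear in the first argument).\<close>
definition ketbra :: "int \<Rightarrow> complex^2 \<Rightarrow> int \<Rightarrow> complex^2 \<Rightarrow> blockop" where
  "ketbra a x b y = (\<lambda>n m. if n = a \<and> m = b then (\<chi> i j. x $ i * cnj (y $ j)) else 0)"

definition U_rt :: "(int \<Rightarrow> real) \<Rightarrow> (int \<Rightarrow> real) \<Rightarrow> blockop" where
  "U_rt r \<theta> = (\<lambda>p q. \<Sum>\<^sub>\<infinity>n. (let s = complex_of_real (sqrt (1 - (r n)\<^sup>2)) in
       ketbra (n - 1) e1 n (complex_of_real (r n) *s e1 + (exp (\<i> * complex_of_real (\<theta> n)) * s) *s e2) p q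
     + ketbra (n + 1) e2 n ((- exp (- \<i> * complex_of_real (\<theta> n)) * s) *s e1 + complex_of_real (r n) *s e2) p q))"

end

theory Submission
  imports Defs
begin


lemma rank0_zero:
  fixes A :: "complex^2^2"
  assumes "rank A = 0" shows "A = 0"
proof -
  have "rows A \<subseteq> {0}" using assms unfolding row_rank_def_gen by simp
  then have "row i A = 0" for i by (auto simp: rows_def)
  then show ?thesis by (simp add: vec_eq_iff row_def)
qed

lemma qw_zero:
  assumes "quantum_walk U" "q \<noteq> p + 1" "q \<noteq> p - 1"
  shows "U p q = 0"
  using assms unfolding quantum_walk_def by (metis rank0_zero)

lemma qw_col:
  assumes "quantum_walk U"
  shows "(\<Sum>p\<in>{n-1,n+1}. (adj2 (U p n) ** U p m) $ j $ k) = (if n = m \<and> j = k then 1 else 0)"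
proof -
  define f where "f = (\<lambda>a. cnj (entry U a (n,j)) * entry U a (m,k))"
  have h: "(f has_sum (if (n,j) = (m,k) then 1 else 0)) UNIV"
    using assms unfolding quantum_walk_def unitary_op_def f_def by blast
  define S where "S = {n-1,n+1} \<times> (UNIV :: 2 set)"
  have z: "f a = 0" if "a \<notin> S" for a
  proof -
    have "fst a \<noteq> n - 1" "fst a \<noteq> n + 1" using that by (auto simp: S_def mem_Times_iff)
    then have "U (fst a) n = 0" using qw_zero[OF assms] by (metis add_diff_cancel_right' diff_add_cancel)
    then show ?thesis by (simp add: f_def entry_def)
  qed
  have "(f has_sum (if (n,j) = (m,k) then 1 else 0)) S"
    using has_sum_cong_neutral[of S UNIV f f] h z by auto
  moreover have "(f has_sum sum f S) S" by (simp add: S_def)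
  ultimately have "sum f S = (if (n,j) = (m,k) then 1 else 0)" using has_sum_unique by blast
  moreover have "sum f S = (\<Sum>p\<in>{n-1,n+1}. (adj2 (U p n) ** U p m) $ j $ k)"
  proof -
    have "sum f S = (\<Sum>p\<in>{n-1,n+1}. \<Sum>i\<in>UNIV. f (p,i))"
      unfolding S_def using sum.cartesian_product[of "\<lambda>p i. f (p,i)" UNIV "{n-1,n+1}"]
      by (simp add: split_def)
    then show ?thesis
      by (simp add: f_def entry_def matrix_matrix_mult_def adj2_def)
  qed
  ultimately show ?thesis by simp
qed



lemma mult2: "((A::complex^2^2) ** B) $ i $ j = A$i$1 * B$1$j + A$i$2 * B$2$j"
  by (simp add: matrix_matrix_mult_def sum_2)

lemma mat2_eq: "(A::complex^2^2) = B \<longleftrightarrow> A$1$1 = B$1$1 \<and> A$1$2 = B$1$2 \<and> A$2$1 = B$2$1 \<and> A$2$2 = B$2$2"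
  by (auto simp: vec_eq_iff forall_2)

definition mk2 :: "complex \<Rightarrow> complex \<Rightarrow> complex \<Rightarrow> complex \<Rightarrow> complex^2^2" where
  "mk2 a b c d = (\<chi> i j. if i = 1 then (if j = 1 then a else b) else (if j = 1 then c else d))"

lemma mk2_simps[simp]: "mk2 a b c d $ 1 $ 1 = a" "mk2 a b c d $ 1 $ 2 = b" "mk2 a b c d $ 2 $ 1 = c" "mk2 a b c d $ 2 $ 2 = d"
  by (simp_all add: mk2_def)

lemma adj2_simps[simp]: "adj2 A $ i $ j = cnj (A $ j $ i)"
  by (simp add: adj2_def)

lemma mat1_simps: "(mat 1 :: complex^2^2) $ 1 $ 1 = 1" "(mat 1 :: complex^2^2) $ 1 $ 2 = 0"
  "(mat 1 :: complex^2^2) $ 2 $ 1 = 0" "(mat 1 :: complex^2^2) $ 2 $ 2 = 1"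
  by (simp_all add: mat_def)

lemma unitary_mk2:
  assumes "u1 * cnj u1 + u2 * cnj u2 = 1"
  shows "unitary2 (mk2 (cnj u1) (cnj u2) (- u2) u1)"
  using assms unfolding unitary2_def mat2_eq mult2 mat1_simps
  by (simp add: algebra_simps)

lemma L1:
  fixes X Y :: "complex^2^2"
  assumes "X \<noteq> 0" "det X = 0" "adj2 Y ** X = 0"
  shows "\<exists>W. unitary2 W \<and> (\<forall>j. (W ** X) $ 2 $ j = 0) \<and> (\<forall>j. (W ** Y) $ 1 $ j = 0)"
proof -
  obtain l where l: "X$1$l \<noteq> 0 \<or> X$2$l \<noteq> 0"
    using assms(1) by (metis (full_types) exhaust_2 mat2_eq zero_index)
  define c1 where "c1 = X$1$l"
  define c2 where "c2 = X$2$l"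
  define N where "N = sqrt ((cmod c1)^2 + (cmod c2)^2)"
  have "(cmod c1)^2 + (cmod c2)^2 > 0" using l unfolding c1_def c2_def
    by (metis add_pos_nonneg add_nonneg_pos norm_eq_zero zero_less_norm_iff zero_less_power2 zero_le_power2)
  then have Npos: "N > 0" and N2: "N^2 = (cmod c1)^2 + (cmod c2)^2" by (simp_all add: N_def)
  define u1 where "u1 = c1 / of_real N"
  define u2 where "u2 = c2 / of_real N"
  have "u1 * cnj u1 + u2 * cnj u2 = 1"
  proof -
    have "u1 * cnj u1 + u2 * cnj u2 = (c1 * cnj c1 + c2 * cnj c2) / of_real (N^2)"
      using Npos by (simp add: u1_def u2_def field_simps power2_eq_square)
    also have "c1 * cnj c1 + c2 * cnj c2 = of_real (N^2)"
      unfolding N2 by (simp add: complex_norm_square[symmetric])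
    finally show ?thesis using Npos by simp
  qed
  note U = unitary_mk2[OF this]
  have det0: "X$1$1 * X$2$2 - X$1$2 * X$2$1 = 0" using assms(2) by (simp add: det_2)
  have a: "(mk2 (cnj u1) (cnj u2) (- u2) u1 ** X) $ 2 $ j = 0" for j
  proof -
    have "c1 * X$2$j - c2 * X$1$j = 0" unfolding c1_def c2_def
      using det0 exhaust_2[of l] exhaust_2[of j] by (auto simp: algebra_simps)
    then show ?thesis by (simp add: mult2 u1_def u2_def field_simps)
  qed
  have b: "(mk2 (cnj u1) (cnj u2) (- u2) u1 ** Y) $ 1 $ j = 0" for j
  proof -
    have "(adj2 Y ** X) $ j $ l = 0" using assms(3) by simp
    then have "cnj (Y$1$j) * c1 + cnj (Y$2$j) * c2 = 0" by (simp add: mult2 c1_def c2_def)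
    then have "cnj c1 * Y$1$j + cnj c2 * Y$2$j = 0"
      by (metis complex_cnj_add complex_cnj_cnj complex_cnj_mult complex_cnj_zero_iff mult.commute)
    then have "(cnj c1 * Y$1$j + cnj c2 * Y$2$j) / of_real N = 0" by simp
    then show ?thesis by (simp add: mult2 u1_def u2_def add_divide_distrib)
  qed
  show ?thesis using U a b by blast
qed



definition vv :: "(int \<Rightarrow> real) \<Rightarrow> (int \<Rightarrow> real) \<Rightarrow> int \<Rightarrow> complex^2" where
  "vv r \<theta> n = complex_of_real (r n) *s e1 + (exp (\<i> * complex_of_real (\<theta> n)) * complex_of_real (sqrt (1 - (r n)\<^sup>2))) *s e2"
definition ww :: "(int \<Rightarrow> real) \<Rightarrow> (int \<Rightarrow> real) \<Rightarrow> int \<Rightarrow> complex^2" where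
  "ww r \<theta> n = (- exp (- \<i> * complex_of_real (\<theta> n)) * complex_of_real (sqrt (1 - (r n)\<^sup>2))) *s e1 + complex_of_real (r n) *s e2"

lemma U_rt_eq: "U_rt r \<theta> p q = ketbra (q - 1) e1 q (vv r \<theta> q) p q + ketbra (q + 1) e2 q (ww r \<theta> q) p q"
proof -
  define F where "F = (\<lambda>n. (let s = complex_of_real (sqrt (1 - (r n)\<^sup>2)) in
       ketbra (n - 1) e1 n (complex_of_real (r n) *s e1 + (exp (\<i> * complex_of_real (\<theta> n)) * s) *s e2) p q
     + ketbra (n + 1) e2 n ((- exp (- \<i> * complex_of_real (\<theta> n)) * s) *s e1 + complex_of_real (r n) *s e2) p q))"
  have "U_rt r \<theta> p q = infsum F UNIV" unfolding U_rt_def F_def ..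
  also have "\<dots> = infsum F {q}"
    by (rule infsum_cong_neutral) (auto simp: F_def ketbra_def Let_def)
  also have "\<dots> = F q" by simp
  finally show ?thesis by (simp add: F_def Let_def vv_def ww_def)
qed

lemma e_simps[simp]: "e1 $ 1 = 1" "e1 $ 2 = 0" "e2 $ 1 = 0" "e2 $ 2 = 1"
  by (simp_all add: e1_def e2_def axis_def)

lemma U_rt_A: "U_rt r \<theta> (q - 1) q = mk2 (cnj (vv r \<theta> q $ 1)) (cnj (vv r \<theta> q $ 2)) 0 0"
  by (simp add: U_rt_eq ketbra_def mat2_eq)
lemma U_rt_B: "U_rt r \<theta> (q + 1) q = mk2 0 0 (cnj (ww r \<theta> q $ 1)) (cnj (ww r \<theta> q $ 2))"
  by (simp add: U_rt_eq ketbra_def mat2_eq)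
lemma U_rt_0: "p \<noteq> q - 1 \<Longrightarrow> p \<noteq> q + 1 \<Longrightarrow> U_rt r \<theta> p q = 0"
  by (simp add: U_rt_eq ketbra_def)



lemma int_recur:
  fixes g :: "int \<Rightarrow> complex"
  assumes g: "\<And>n. cmod (g n) = 1" and c: "cmod c = 1"
  shows "\<exists>f. f 0 = c \<and> (\<forall>n. f n = f (n - 1) * g n) \<and> (\<forall>n. cmod (f n) = 1)"
proof -
  define f where "f = (\<lambda>n. if n \<ge> 0 then c * (\<Prod>k<nat n. g (int k + 1))
                          else c * (\<Prod>k<nat (-n). cnj (g (- int k))))"
  have gg: "cnj (g n) * g n = 1" for n
    using g[of n] by (metis complex_norm_square mult.commute of_real_1 power_one)
  have rec: "f n = f (n - 1) * g n" for n
  proof (cases "n > 0")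
    case True
    then have "nat n = Suc (nat (n - 1))" by simp
    then show ?thesis using True by (simp add: f_def mult.assoc)
  next
    case False
    show ?thesis
    proof (cases "n = 0")
      case True then show ?thesis by (simp add: f_def gg)
    next
      case False
      with \<open>\<not> n > 0\<close> have "n < 0" by simp
      then have "nat (- (n - 1)) = Suc (nat (- n))" by simp
      then show ?thesis using \<open>n < 0\<close>
        by (simp add: f_def gg mult.assoc)
    qed
  qed
  have "cmod (f n) = 1" for n
    by (simp add: f_def c norm_mult prod_norm[symmetric] g)
  moreover have "f 0 = c" by (simp add: f_def)
  ultimately show ?thesis using rec by blast
qed

lemma "cnj (exp (\<i> * complex_of_real t)) = exp (- (\<i> * complex_of_real t))"
  by (simp add: exp_cnj)


lemma mcnj: "z * cnj z = (complex_of_real (cmod z))^2"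
  by (metis complex_norm_square of_real_power)

definition sg :: "complex \<Rightarrow> complex" where
  "sg z = (if z = 0 then 1 else z / of_real (cmod z))"

lemma sg_norm: "cmod (sg z) = 1"
  by (simp add: sg_def norm_divide)

lemma sg_mult: "cnj (sg z) * z = of_real (cmod z)"
proof (cases "z = 0")
  case False
  then have "cnj z * z = (of_real (cmod z))^2" by (simp add: mcnj mult.commute)
  then show ?thesis using False by (simp add: sg_def power2_eq_square field_simps)
qed (simp add: sg_def)

lemma unit_cnj: "cmod u = 1 \<Longrightarrow> cnj u = inverse u"
  by (metis complex_div_cnj div_by_1 divide_inverse mult_1 of_real_1 power_one)

lemma unit_nz: "cmod u = 1 \<Longrightarrow> u \<noteq> 0"
  by auto

lemma L3:
  fixes a1 a2 b1 b2 :: "int \<Rightarrow> complex"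
  assumes R11: "\<And>n. a1 n * cnj (a1 n) + a2 n * cnj (a2 n) = 1"
    and R12: "\<And>n. a1 n * cnj (b1 n) + a2 n * cnj (b2 n) = 0"
    and R22: "\<And>n. b1 n * cnj (b1 n) + b2 n * cnj (b2 n) = 1"
  shows "\<exists>(lam::real) (\<alpha>::int\<Rightarrow>complex) (\<beta>::int\<Rightarrow>complex) (r::int\<Rightarrow>real) (\<theta>::int\<Rightarrow>real).
     (\<forall>n. cmod (\<alpha> n) = 1 \<and> cmod (\<beta> n) = 1 \<and> 0 \<le> r n \<and> r n \<le> 1) \<and> \<theta> 0 = 0 \<and> \<theta> 1 = 0 \<and>
     (\<forall>n. exp (\<i> * complex_of_real lam) * \<alpha> (n - 1) * cnj (\<alpha> n) * a1 n = complex_of_real (r n) \<and>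
          exp (\<i> * complex_of_real lam) * \<alpha> (n - 1) * cnj (\<beta> n) * a2 n =
             cnj (exp (\<i> * complex_of_real (\<theta> n))) * complex_of_real (sqrt (1 - (r n)\<^sup>2)) \<and>
          exp (\<i> * complex_of_real lam) * \<beta> (n + 1) * cnj (\<alpha> n) * b1 n =
             - (cnj (exp (- (\<i> * complex_of_real (\<theta> n)))) * complex_of_real (sqrt (1 - (r n)\<^sup>2))) \<and>
          exp (\<i> * complex_of_real lam) * \<beta> (n + 1) * cnj (\<beta> n) * b2 n = complex_of_real (r n))"
proof -
  define \<omega> where "\<omega> n = a1 n * b2 n - a2 n * b1 n" for n
  have R12': "cnj (a1 n) * b1 n + cnj (a2 n) * b2 n = 0" for n
    using arg_cong[OF R12[of n], of cnj] by (simp add: mult.commute)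
  have b2: "b2 n = \<omega> n * cnj (a1 n)" for n
  proof -
    have "\<omega> n * cnj (a1 n) = a1 n * cnj (a1 n) * b2 n - a2 n * (cnj (a1 n) * b1 n)"
      by (simp add: \<omega>_def algebra_simps)
    also have "cnj (a1 n) * b1 n = - (cnj (a2 n) * b2 n)" using R12'[of n] by (simp add: eq_neg_iff_add_eq_0)
    finally have "\<omega> n * cnj (a1 n) = (a1 n * cnj (a1 n) + a2 n * cnj (a2 n)) * b2 n"
      by (simp add: algebra_simps)
    then show ?thesis using R11[of n] by simp
  qed
  have b1: "b1 n = - (\<omega> n * cnj (a2 n))" for n
  proof -
    have "\<omega> n * cnj (a2 n) = a1 n * (cnj (a2 n) * b2 n) - a2 n * cnj (a2 n) * b1 n"
      by (simp add: \<omega>_def algebra_simps)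
    also have "cnj (a2 n) * b2 n = - (cnj (a1 n) * b1 n)" using R12'[of n] by (simp add: eq_neg_iff_add_eq_0 add.commute)
    finally have "\<omega> n * cnj (a2 n) = - ((a1 n * cnj (a1 n) + a2 n * cnj (a2 n)) * b1 n)"
      by (simp add: algebra_simps)
    then show ?thesis using R11[of n] by simp
  qed
  have normsq: "(cmod (a1 n))\<^sup>2 + (cmod (a2 n))\<^sup>2 = 1" for n
  proof -
    have "complex_of_real ((cmod (a1 n))\<^sup>2 + (cmod (a2 n))\<^sup>2) = 1"
      using R11[of n] by (simp add: mcnj)
    then show ?thesis using of_real_eq_1_iff by blast
  qed
  have om: "cmod (\<omega> n) = 1" for n
  proof -
    have "b1 n * cnj (b1 n) + b2 n * cnj (b2 n) = \<omega> n * cnj (\<omega> n) * (a1 n * cnj (a1 n) + a2 n * cnj (a2 n))"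
      unfolding b1 b2 by (simp add: algebra_simps)
    then have "\<omega> n * cnj (\<omega> n) = 1" using R11[of n] R22[of n] by simp
    then have "complex_of_real ((cmod (\<omega> n))\<^sup>2) = 1" by (simp add: mcnj)
    then have "(cmod (\<omega> n))\<^sup>2 = 1" using of_real_eq_1_iff by blast
    then show ?thesis using norm_ge_zero[of "\<omega> n"] by (auto simp add: power2_eq_1_iff)
  qed
  define z0 where "z0 = sg (a2 0) * cnj (\<omega> 0) * cnj (sg (a2 1))"
  have z0n: "cmod z0 = 1" by (simp add: z0_def norm_mult sg_norm om)
  define lam where "lam = Arg z0 / 2"
  define \<mu> where "\<mu> = exp (\<i> * complex_of_real lam)"
  have mun: "cmod \<mu> = 1" by (simp add: \<mu>_def)
  have mu2: "\<mu> * \<mu> = z0"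
  proof -
    have "\<mu> * \<mu> = exp (\<i> * complex_of_real (Arg z0))"
      by (simp add: \<mu>_def lam_def exp_add[symmetric] algebra_simps)
    also have "\<dots> = z0" by (metis Arg_eq unit_nz z0n mult_1 of_real_1)
    finally show ?thesis .
  qed
  obtain \<alpha> where a0: "\<alpha> 0 = 1" and arec: "\<And>n. \<alpha> n = \<alpha> (n - 1) * (\<mu> * sg (a1 n))"
      and an: "\<And>n. cmod (\<alpha> n) = 1"
  proof -
    have "\<exists>f. f 0 = 1 \<and> (\<forall>n. f n = f (n - 1) * (\<mu> * sg (a1 n))) \<and> (\<forall>n. cmod (f n) = 1)"
      by (rule int_recur) (simp_all add: norm_mult mun sg_norm)
    then show ?thesis using that by blast
  qed
  obtain \<beta> where b0: "\<beta> 0 = cnj (sg (a1 0)) * sg (a2 0)"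
      and brec: "\<And>n. \<beta> n = \<beta> (n - 1) * (cnj \<mu> * sg (a1 (n - 1)) * cnj (\<omega> (n - 1)))"
      and bn: "\<And>n. cmod (\<beta> n) = 1"
  proof -
    have "\<exists>f. f 0 = cnj (sg (a1 0)) * sg (a2 0) \<and> (\<forall>n. f n = f (n - 1) * (cnj \<mu> * sg (a1 (n - 1)) * cnj (\<omega> (n - 1)))) \<and> (\<forall>n. cmod (f n) = 1)"
      by (rule int_recur) (simp_all add: norm_mult mun sg_norm om)
    then show ?thesis using that by blast
  qed
  have brec': "\<beta> (n + 1) = \<beta> n * (cnj \<mu> * sg (a1 n) * cnj (\<omega> n))" for n
    using brec[of "n + 1"] by simp
  define X where "X n = \<mu> * \<alpha> (n - 1) * cnj (\<beta> n) * a2 n" for n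
  define r where "r n = cmod (a1 n)" for n
  define \<theta> where "\<theta> n = (if n = 0 \<or> n = 1 then 0 else - Arg (X n))" for n
  have sq: "sqrt (1 - (r n)\<^sup>2) = cmod (a2 n)" for n
  proof -
    have "1 - (r n)\<^sup>2 = (cmod (a2 n))\<^sup>2" using normsq[of n] unfolding r_def by linarith
    then show ?thesis by simp
  qed
  have Xn: "cmod (X n) = cmod (a2 n)" for n
    by (simp add: X_def norm_mult mun an bn)
  have E2: "X n = cnj (exp (\<i> * complex_of_real (\<theta> n))) * complex_of_real (sqrt (1 - (r n)\<^sup>2))" for n
  proof -
    have uu: "cmod u = 1 \<Longrightarrow> u * cnj u = 1" for u by (simp add: mcnj)
    have uu': "cmod u = 1 \<Longrightarrow> cnj u * u = 1" for u by (simp add: mcnj mult.commute)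
    have s0: "sg (a1 0) * cnj (sg (a1 0)) = 1" by (rule uu[OF sg_norm])
    have X0: "X 0 = of_real (cmod (a2 0))"
    proof -
      have "1 = \<alpha> (- 1) * (\<mu> * sg (a1 0))" using arec[of 0] a0 by simp
      then have "\<mu> * \<alpha> (- 1) = cnj (sg (a1 0))"
        by (metis s0 mult.assoc mult.commute mult_1)
      then have "X 0 = cnj (sg (a1 0)) * (sg (a1 0) * (cnj (sg (a2 0)) * a2 0))"
        by (simp add: X_def b0 mult.assoc)
      also have "\<dots> = cnj (sg (a2 0)) * a2 0"
        using uu'[OF sg_norm[of "a1 0"]] by (simp add: mult.assoc[symmetric])
      finally show ?thesis by (simp add: sg_mult)
    qed
    have X1: "X 1 = of_real (cmod (a2 1))"
    proof -
      have cb1: "cnj (\<beta> 1) = \<mu> * cnj (sg (a2 0)) * \<omega> 0"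
        using brec'[of 0] b0 s0 by (simp add: algebra_simps)
      have "X 1 = (\<mu> * \<mu>) * cnj (sg (a2 0)) * \<omega> 0 * a2 1"
        by (simp add: X_def a0 cb1 algebra_simps)
      also have "\<dots> = (sg (a2 0) * cnj (sg (a2 0))) * (cnj (\<omega> 0) * \<omega> 0) * (cnj (sg (a2 1)) * a2 1)"
        by (simp add: mu2 z0_def algebra_simps)
      also have "\<dots> = cnj (sg (a2 1)) * a2 1"
        by (simp add: uu[OF sg_norm] uu'[OF om])
      finally show ?thesis by (simp add: sg_mult)
    qed
    show ?thesis
    proof (cases "n = 0 \<or> n = 1")
      case True
      then show ?thesis using X0 X1 by (auto simp: \<theta>_def sq)
    next
      case False
      show ?thesis
      proof (cases "X n = 0")
        case True
        then have "cmod (a2 n) = 0" using Xn[of n] by simp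
        then show ?thesis using True by (simp add: sq)
      next
        case nz: False
        have "cnj (exp (\<i> * complex_of_real (\<theta> n))) = exp (\<i> * complex_of_real (Arg (X n)))"
          using False by (simp add: \<theta>_def exp_cnj)
        then show ?thesis using Arg_eq[OF nz] Xn[of n] sq[of n] by (simp add: mult.commute)
      qed
    qed
  qed
  have uu: "cmod u = 1 \<Longrightarrow> u * cnj u = 1" for u by (simp add: mcnj)
  have E1: "\<mu> * \<alpha> (n - 1) * cnj (\<alpha> n) * a1 n = complex_of_real (r n)" for n
  proof -
    have "\<mu> * \<alpha> (n - 1) * cnj (\<alpha> n) * a1 n = (\<alpha> (n - 1) * cnj (\<alpha> (n - 1))) * (\<mu> * cnj \<mu>) * (cnj (sg (a1 n)) * a1 n)"
      by (subst arec[of n]) (simp add: algebra_simps)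
    then show ?thesis by (simp add: uu an mun sg_mult r_def)
  qed
  have E4: "\<mu> * \<beta> (n + 1) * cnj (\<beta> n) * b2 n = complex_of_real (r n)" for n
  proof -
    have "\<mu> * \<beta> (n + 1) * cnj (\<beta> n) * b2 n = (\<beta> n * cnj (\<beta> n)) * (\<mu> * cnj \<mu>) * (\<omega> n * cnj (\<omega> n)) * cnj (cnj (sg (a1 n)) * a1 n)"
      by (subst brec') (simp add: b2 algebra_simps)
    then show ?thesis by (simp add: uu bn mun om sg_mult r_def)
  qed
  have E3: "\<mu> * \<beta> (n + 1) * cnj (\<alpha> n) * b1 n =
             - (cnj (exp (- (\<i> * complex_of_real (\<theta> n)))) * complex_of_real (sqrt (1 - (r n)\<^sup>2)))" for n
  proof -
    have "\<mu> * \<beta> (n + 1) * cnj (\<alpha> n) * b1 n = - ((\<mu> * cnj \<mu>) * (\<omega> n * cnj (\<omega> n)) * (sg (a1 n) * cnj (sg (a1 n))) * cnj (X n))"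
      by (subst arec[of n], subst brec') (simp add: X_def b1 algebra_simps)
    also have "\<dots> = - cnj (X n)" by (simp add: uu mun om sg_norm)
    also have "\<dots> = - (cnj (exp (- (\<i> * complex_of_real (\<theta> n)))) * complex_of_real (sqrt (1 - (r n)\<^sup>2)))"
      by (subst E2) (simp add: exp_cnj)
    finally show ?thesis .
  qed
  have rr: "0 \<le> r n \<and> r n \<le> 1" for n
  proof -
    have "(r n)\<^sup>2 \<le> 1" using normsq[of n] unfolding r_def by (smt (verit) zero_le_power2)
    then show ?thesis unfolding r_def by (simp add: power_le_one_iff abs_le_iff) 
  qed
  show ?thesis
    apply (rule exI[of _ lam], rule exI[of _ \<alpha>], rule exI[of _ \<beta>], rule exI[of _ r], rule exI[of _ \<theta>])
    using E1 E2 E3 E4 rr an bn unfolding X_def \<mu>_def by (simp add: \<theta>_def)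
qed


lemma rank1_facts:
  fixes A :: "complex^2^2"
  assumes "rank A = 1" shows "A \<noteq> 0" "det A = 0"
proof -
  show "A \<noteq> 0"
  proof
    assume "A = 0"
    then have "rows A \<subseteq> {0}" by (auto simp: rows_def row_def vec_eq_iff)
    then have "rank A = 0" unfolding row_rank_def_gen by simp
    with assms show False by simp
  qed
  show "det A = 0"
  proof (rule ccontr)
    assume "det A \<noteq> 0"
    then have "invertible A" by (simp add: invertible_det_nz)
    then obtain B where "B ** A = mat 1" unfolding invertible_def by blast
    then have "vec.span (rows A) = UNIV" using matrix_left_invertible_span_rows_gen by blast
    then have "vec.dim (rows A) = CARD(2)"
      by (metis vec.dim_span vec_dim_card)
    with assms show False unfolding row_rank_def_gen by simp
  qed
qed

lemma adj2_mult: "adj2 (A ** B) = adj2 B ** adj2 A"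
  by (simp add: mat2_eq mult2 mult.commute)

lemma adj2_adj2[simp]: "adj2 (adj2 A) = A"
  by (simp add: mat2_eq)

lemma matrix_add_rdistrib2: "((A::complex^2^2) + B) ** (C::complex^2^2) = A ** C + B ** C"
  by (simp add: mat2_eq mult2 algebra_simps)

lemma mat_mult2: "(mat c ** (A::complex^2^2)) $ i $ j = c * A $ i $ j"
  by (simp add: matrix_matrix_mult_def mat_def sum_2 forall_2) (metis exhaust_2)

lemma unitary2_mult: "unitary2 A \<Longrightarrow> unitary2 B \<Longrightarrow> unitary2 (A ** B)"
  unfolding unitary2_def adj2_mult
  by (metis matrix_mul_assoc matrix_mul_lid)

lemma unitary2_diag: "cmod a = 1 \<Longrightarrow> cmod b = 1 \<Longrightarrow> unitary2 (mk2 a 0 0 b)"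
  unfolding unitary2_def mat2_eq mult2 mat1_simps
  by (simp add: mcnj mult.commute)

lemma qw_C1:
  assumes "quantum_walk U"
  shows "adj2 (U (n-1) n) ** U (n-1) n + adj2 (U (n+1) n) ** U (n+1) n = mat 1"
proof -
  have "n - 1 \<noteq> n + 1" by simp
  then show ?thesis using qw_col[OF assms, of n n]
    by (simp add: vec_eq_iff mat_def)
qed

lemma qw_C2:
  assumes "quantum_walk U"
  shows "adj2 (U n (n-1)) ** U n (n+1) = 0"
proof -
  have z: "U (n - 2) (n + 1) = 0" by (rule qw_zero[OF assms]) auto
  have "(adj2 (U n (n-1)) ** U n (n+1)) $ j $ k = 0" for j k
  proof -
    have "n - 1 - 1 \<noteq> n - 1 + 1" by simp
    then have "(\<Sum>p\<in>{n-1-1, n-1+1}. (adj2 (U p (n-1)) ** U p (n+1)) $ j $ k) = 0"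
      using qw_col[OF assms, of "n-1" "n+1" j k] by simp
    then show ?thesis using z by (simp add: mult2)
  qed
  then show ?thesis by (simp add: vec_eq_iff)
qed



lemma matc_simps: "(mat c :: complex^2^2) $ 1 $ 1 = c" "(mat c :: complex^2^2) $ 1 $ 2 = 0"
  "(mat c :: complex^2^2) $ 2 $ 1 = 0" "(mat c :: complex^2^2) $ 2 $ 2 = c"
  by (simp_all add: mat_def)

theorem theorem2p4:
  fixes U :: blockop
  assumes "quantum_walk U"
  shows "\<exists>(r::int \<Rightarrow> real) (\<theta>::int \<Rightarrow> real).
           (\<forall>n. 0 \<le> r n \<and> r n \<le> 1) \<and> \<theta> 0 = 0 \<and> \<theta> 1 = 0 \<and>
           unitary_equiv U (U_rt r \<theta>)"
proof -
  note qw = assms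
  have rk: "rank (U n (n + 1)) = 1" for n
    using qw unfolding quantum_walk_def by auto
  have "\<forall>n. \<exists>W. unitary2 W \<and> (\<forall>j. (W ** U n (n + 1)) $ 2 $ j = 0) \<and> (\<forall>j. (W ** U n (n - 1)) $ 1 $ j = 0)"
    using L1 rank1_facts[OF rk] qw_C2[OF qw] by blast
  then obtain W0 where W0u: "\<And>n. unitary2 (W0 n)"
    and W0a: "\<And>n j. (W0 n ** U n (n + 1)) $ 2 $ j = 0"
    and W0b: "\<And>n j. (W0 n ** U n (n - 1)) $ 1 $ j = 0"
    by metis
  define A' where "A' n = W0 (n - 1) ** U (n - 1) n ** adj2 (W0 n)" for n
  define B' where "B' n = W0 (n + 1) ** U (n + 1) n ** adj2 (W0 n)" for n
  have A'2: "A' n $ 2 $ j = 0" for n j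
    using W0a[of "n - 1"] by (simp add: A'_def mult2)
  have B'1: "B' n $ 1 $ j = 0" for n j
    using W0b[of "n + 1"] by (simp add: B'_def mult2)
  define M where "M n = mk2 (A' n $ 1 $ 1) (A' n $ 1 $ 2) (B' n $ 2 $ 1) (B' n $ 2 $ 2)" for n
  have MM: "adj2 (M n) ** M n = mat 1" for n
  proof -
    have "adj2 (M n) ** M n = adj2 (A' n) ** A' n + adj2 (B' n) ** B' n"
      by (simp add: M_def mat2_eq mult2 A'2 B'1)
    also have "\<dots> = W0 n ** (adj2 (U (n-1) n) ** U (n-1) n + adj2 (U (n+1) n) ** U (n+1) n) ** adj2 (W0 n)"
    proof -
      have uW: "adj2 (W0 m) ** W0 m = mat 1" for m using W0u[of m] unfolding unitary2_def by blast
      have "adj2 (W0 m' ** X ** adj2 (W0 m)) ** (W0 m' ** X ** adj2 (W0 m)) = W0 m ** (adj2 X ** X) ** adj2 (W0 m)" for m m' X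
      proof -
        have "adj2 (W0 m' ** X ** adj2 (W0 m)) ** (W0 m' ** X ** adj2 (W0 m)) =
              W0 m ** adj2 X ** (adj2 (W0 m') ** W0 m') ** X ** adj2 (W0 m)"
          by (simp add: adj2_mult matrix_mul_assoc)
        then show ?thesis by (simp add: uW matrix_mul_assoc)
      qed
      then show ?thesis
        by (simp add: A'_def B'_def matrix_add_ldistrib matrix_add_rdistrib2)
    qed
    also have "\<dots> = mat 1"
      using W0u[of n] by (simp add: qw_C1[OF qw] unitary2_def)
    finally show ?thesis .
  qed
  have MM': "M n ** adj2 (M n) = mat 1" for n
    using MM matrix_left_right_inverse by blast
  have R11: "A' n $ 1 $ 1 * cnj (A' n $ 1 $ 1) + A' n $ 1 $ 2 * cnj (A' n $ 1 $ 2) = 1" for n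
    using MM'[of n] by (simp add: mat2_eq mult2 mat1_simps M_def)
  have R12: "A' n $ 1 $ 1 * cnj (B' n $ 2 $ 1) + A' n $ 1 $ 2 * cnj (B' n $ 2 $ 2) = 0" for n
    using MM'[of n] by (simp add: mat2_eq mult2 mat1_simps M_def)
  have R22: "B' n $ 2 $ 1 * cnj (B' n $ 2 $ 1) + B' n $ 2 $ 2 * cnj (B' n $ 2 $ 2) = 1" for n
    using MM'[of n] by (simp add: mat2_eq mult2 mat1_simps M_def)
  obtain lam \<alpha> \<beta> r \<theta> where
    nrm: "\<And>n. cmod (\<alpha> n) = 1 \<and> cmod (\<beta> n) = 1 \<and> 0 \<le> r n \<and> r n \<le> 1" and th: "\<theta> 0 = 0" "\<theta> 1 = 0" and
    E: "\<And>n. exp (\<i> * complex_of_real lam) * \<alpha> (n - 1) * cnj (\<alpha> n) * (A' n $ 1 $ 1) = complex_of_real (r n) \<and>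
          exp (\<i> * complex_of_real lam) * \<alpha> (n - 1) * cnj (\<beta> n) * (A' n $ 1 $ 2) =
             cnj (exp (\<i> * complex_of_real (\<theta> n))) * complex_of_real (sqrt (1 - (r n)\<^sup>2)) \<and>
          exp (\<i> * complex_of_real lam) * \<beta> (n + 1) * cnj (\<alpha> n) * (B' n $ 2 $ 1) =
             - (cnj (exp (- (\<i> * complex_of_real (\<theta> n)))) * complex_of_real (sqrt (1 - (r n)\<^sup>2))) \<and>
          exp (\<i> * complex_of_real lam) * \<beta> (n + 1) * cnj (\<beta> n) * (B' n $ 2 $ 2) = complex_of_real (r n)"
    using L3[of "\<lambda>n. A' n $ 1 $ 1" "\<lambda>n. A' n $ 1 $ 2" "\<lambda>n. B' n $ 2 $ 1" "\<lambda>n. B' n $ 2 $ 2", OF R11 R12 R22]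
    by blast
  define D where "D n = mk2 (\<alpha> n) 0 0 (\<beta> n)" for n
  define W where "W n = D n ** W0 n" for n
  define \<mu> where "\<mu> = exp (\<i> * complex_of_real lam)"
  have Wu: "unitary2 (W n)" for n
    unfolding W_def D_def using unitary2_mult unitary2_diag nrm W0u by blast
  have conj: "W p ** U p q ** adj2 (W q) = D p ** (W0 p ** U p q ** adj2 (W0 q)) ** adj2 (D q)" for p q
    by (simp add: W_def adj2_mult matrix_mul_assoc)
  have blk: "mat \<mu> ** W p ** U p q ** adj2 (W q) = U_rt r \<theta> p q" for p q
  proof -
    consider (a) "p = q - 1" | (b) "p = q + 1" | (c) "p \<noteq> q - 1" "p \<noteq> q + 1" by blast
    then show ?thesis
    proof cases
      case a
      have "mat \<mu> ** W p ** U p q ** adj2 (W q) = mat \<mu> ** (D (q - 1) ** A' q ** adj2 (D q))"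
        using conj[of p q] by (simp add: a A'_def matrix_mul_assoc[symmetric])
      also have "\<dots> = U_rt r \<theta> p q"
        using E[of q] unfolding a U_rt_A
        by (simp add: mat2_eq matc_simps mult2 D_def A'2 vv_def \<mu>_def algebra_simps)
      finally show ?thesis .
    next
      case b
      have "mat \<mu> ** W p ** U p q ** adj2 (W q) = mat \<mu> ** (D (q + 1) ** B' q ** adj2 (D q))"
        using conj[of p q] by (simp add: b B'_def matrix_mul_assoc[symmetric])
      also have "\<dots> = U_rt r \<theta> p q"
        using E[of q] unfolding b U_rt_B
        by (simp add: mat2_eq matc_simps mult2 D_def B'1 ww_def \<mu>_def algebra_simps)
      finally show ?thesis .
    next
      case c
      have "U p q = 0" using c by (intro qw_zero[OF qw]) auto
      then show ?thesis using c by (simp add: U_rt_0)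
    qed
  qed
  have "unitary_equiv U (U_rt r \<theta>)"
    unfolding unitary_equiv_def using Wu blk unfolding \<mu>_def by blast
  then show ?thesis using nrm th by blast
qed

end
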